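(* Consider orbit codes in $\mathrm{Gr}_q(k,n)$, each given together with a defining pair $(\mathcal{U},\mathfrak{S})$ with $\mathcal{U}\in\mathrm{Gr}_q(k,n)$ and $\mathfrak{S}<GL_n(\mathbb{F}_q)$. The conjugacy relation $\sim_c$ on orbit codes is an equivalence relation. Moreover, if $\mathcal{C}_1\sim_c\mathcal{C}_2$, then $|\mathcal{C}_1|=|\mathcal{C}_2|$ and $\mathcal{C}_1,\mathcal{C}_2$ have the same distance distribution.
   Context: $\mathrm{Gr}_q(k,n)$ denotes the set of $k$-dimensional subspaces of $\mathbb{F}_q^n$, with subspace distance $d(\mathcal{U}_1,\mathcal{U}_2)=\dim\mathcal{U}_1+\dim\mathcal{U}_2-2\dim(\mathcal{U}_1\cap\mathcal{U}_2)$. $GL_n(\mathbb{F}_q)$ acts on the right on $\mathrm{Gr}_q(k,n)$ by $\mathcal{U}A:=\mathrm{rowsp}(UA)$, where $U\in\mathbb{F}_q^{k\times n}$ is any matrix with $\mathrm{rowsp}(U)=\mathcal{U}$. For $\mathcal{U}\in\mathrm{Gr}_q(k,n)$ and a subgroup $\mathfrak{S}<GL_n(\mathbb{F}_q)$, the orbit code defined by $(\mathcal{U},\mathfrak{S})$ is $\mathcal{C}=\{\mathcal{U}A\mid A\in\mathfrak{S}\}$. Two orbit codes $\mathcal{C}_1$, $\mathcal{C}_2$ defined by $(\mathcal{U}_1,\mathfrak{S}_1)$ and $(\mathcal{U}_2,\mathfrak{S}_2)$ are conjugate, $\mathcal{C}_1\sim_c\mathcal{C}_2$, if there exists $L\in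 GL_n(\mathbb{F}_q)$ with $\mathcal{U}_2=\mathcal{U}_1L$ and $\mathfrak{S}_2=L^{-1}\mathfrak{S}_1L$. The stabilizer of $\mathcal{U}$ is $\mathrm{Stab}(\mathcal{U})=\{A\in GL_n(\mathbb{F}_q)\mid\mathcal{U}A=\mathcal{U}\}$. The distance distribution of the orbit code defined by $(\mathcal{U},\mathfrak{S})$ is the tuple $(D_0,\dots,D_k)$ with $D_i=|\{A\in\mathfrak{S}\mid d(\mathcal{U},\mathcal{U}A)=2i\}|/|\mathfrak{S}\cap\mathrm{Stab}(\mathcal{U})|$. *)

theory Defs
  imports "HOL-Analysis.Analysis"
begin

text \<open>Setting: F_q is a finite field type 'a; F_q^n is 'a^'n (row vectors);
  n x n matrices are 'a^'n^'n.\<close>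

definition Grass :: "nat \<Rightarrow> ('a::{field,finite}^'n) set set" where
  "Grass k = {W. vec.subspace W \<and> vec.dim W = k}"

definition GL :: "('a::{field,finite}^'n^'n) set" where
  "GL = {A. invertible A}"

definition subgroup_GL :: "('a::{field,finite}^'n^'n) set \<Rightarrow> bool" where
  "subgroup_GL S \<longleftrightarrow> S \<subseteq> GL \<and> mat 1 \<in> S \<and>
     (\<forall>A\<in>S. \<forall>B\<in>S. A ** B \<in> S) \<and> (\<forall>A\<in>S. matrix_inv A \<in> S)"

definition act :: "('a::{field,finite}^'n) set \<Rightarrow> 'a^'n^'n \<Rightarrow> ('a^'n) set" where
  "act U A = (\<lambda>v. v v* A) ` U"

definition subspace_dist :: "('a::{field,finite}^'n) set \<Rightarrow> ('a^'n) set \<Rightarrow> nat" where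
  "subspace_dist U1 U2 = vec.dim U1 + vec.dim U2 - 2 * vec.dim (U1 \<inter> U2)"

definition orbit_code :: "('a::{field,finite}^'n) set \<Rightarrow> ('a^'n^'n) set \<Rightarrow> ('a^'n) set set" where
  "orbit_code U S = {act U A | A. A \<in> S}"

definition Stab :: "('a::{field,finite}^'n) set \<Rightarrow> ('a^'n^'n) set" where
  "Stab U = {A \<in> GL. act U A = U}"

definition conj_orbit :: "('a::{field,finite}^'n) set \<times> ('a^'n^'n) set
     \<Rightarrow> ('a^'n) set \<times> ('a^'n^'n) set \<Rightarrow> bool" where
  "conj_orbit P1 P2 \<longleftrightarrow> (\<exists>L \<in> GL. fst P2 = act (fst P1) L \<and>
      snd P2 = (\<lambda>A. matrix_inv L ** A ** L) ` snd P1)"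

definition dist_distr :: "nat \<Rightarrow> ('a::{field,finite}^'n) set \<Rightarrow> ('a^'n^'n) set \<Rightarrow> rat list" where
  "dist_distr k U S = map (\<lambda>i. of_nat (card {A \<in> S. subspace_dist U (act U A) = 2 * i})
        / of_nat (card (S \<inter> Stab U))) [0..<Suc k]"

definition orbit_pairs :: "nat \<Rightarrow> (('a::{field,finite}^'n) set \<times> ('a^'n^'n) set) set" where
  "orbit_pairs k = {(U, S). U \<in> Grass k \<and> subgroup_GL S}"

end

theory Submission
  imports Defs
begin

lemma minv_props:
  fixes L :: "'a::field^'n^'n"
  assumes "invertible L"
  shows "L ** matrix_inv L = mat 1 \<and> matrix_inv L ** L = mat 1"
  using assms unfolding matrix_inv_def invertible_def by (rule someI_ex)

lemma minv_unique:
  fixes A B :: "'a::field^'n^'n"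
  assumes "A ** B = mat 1" "B ** A = mat 1"
  shows "matrix_inv A = B"
proof -
  have inv: "invertible A" using assms unfolding invertible_def by blast
  let ?C = "matrix_inv A"
  have "?C = ?C ** (A ** B)" using assms by simp
  also have "\<dots> = (?C ** A) ** B" by (simp add: matrix_mul_assoc)
  also have "\<dots> = B" using minv_props[OF inv] by simp
  finally show ?thesis .
qed

lemma minv_inv:
  fixes L :: "'a::field^'n^'n"
  assumes "invertible L"
  shows "invertible (matrix_inv L)" "matrix_inv (matrix_inv L) = L"
  using minv_props[OF assms] unfolding invertible_def
   apply blast
  using minv_props[OF assms] minv_unique by blast

lemma minv_mult:
  fixes L M :: "'a::field^'n^'n"
  assumes "invertible L" "invertible M"
  shows "matrix_inv (L ** M) = matrix_inv M ** matrix_inv L"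
proof (rule minv_unique)
  note l = minv_props[OF assms(1)] and m = minv_props[OF assms(2)]
  have "L ** M ** (matrix_inv M ** matrix_inv L) = L ** (M ** matrix_inv M) ** matrix_inv L"
    by (simp add: matrix_mul_assoc)
  then show "L ** M ** (matrix_inv M ** matrix_inv L) = mat 1" using l m by simp
  have "matrix_inv M ** matrix_inv L ** (L ** M) = matrix_inv M ** (matrix_inv L ** L) ** M"
    by (simp add: matrix_mul_assoc)
  then show "matrix_inv M ** matrix_inv L ** (L ** M) = mat 1" using l m by simp
qed

lemma act_mult: "act (act U A) B = act U (A ** B)"
  unfolding act_def image_image vector_matrix_mul_assoc ..

lemma act_id: "act U (mat 1) = U"
  unfolding act_def by simp

lemma act_cancel:
  fixes L :: "'a::{field,finite}^'n^'n"
  assumes "invertible L"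
  shows "act (act U L) (matrix_inv L) = U"
  using minv_props[OF assms] by (simp add: act_mult act_id)

lemma act_inj:
  fixes L :: "'a::{field,finite}^'n^'n"
  assumes "invertible L" "act U L = act W L"
  shows "U = W"
proof -
  have "U = act (act U L) (matrix_inv L)" by (rule act_cancel[OF assms(1), symmetric])
  also have "\<dots> = act (act W L) (matrix_inv L)" using assms(2) by (simp only:)
  also have "\<dots> = W" by (rule act_cancel[OF assms(1)])
  finally show ?thesis .
qed

lemma vm_inj:
  fixes L :: "'a::{field,finite}^'n^'n"
  assumes "invertible L"
  shows "inj (\<lambda>v. v v* L)"
proof (rule injI)
  fix x y assume "x v* L = y v* L"
  then have "(x v* L) v* matrix_inv L = (y v* L) v* matrix_inv L" by simp
  then show "x = y" using minv_props[OF assms] by (simp add: vector_matrix_mul_assoc)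
qed

lemma dim_act:
  fixes L :: "'a::{field,finite}^'n^'n"
  assumes "invertible L"
  shows "vec.dim (act U L) = vec.dim U"
proof -
  have "act U L = (*v) (transpose L) ` U" unfolding act_def by simp
  moreover have "(*v) (transpose L) = (\<lambda>v. v v* L)" by (rule ext) simp
  then have "inj ((*v) (transpose L))"
    using vm_inj[OF assms] by simp
  ultimately show ?thesis
    using vec.dim_image_eq[OF matrix_vector_mul_linear_gen, of "transpose L" U]
    by (simp add: inj_on_def)
qed

lemma dist_act:
  fixes L :: "'a::{field,finite}^'n^'n"
  assumes "invertible L"
  shows "subspace_dist (act U L) (act W L) = subspace_dist U W"
proof -
  have "act U L \<inter> act W L = act (U \<inter> W) L"
    unfolding act_def using image_Int[OF vm_inj[OF assms]] by simp
  then show ?thesis unfolding subspace_dist_def using dim_act[OF assms] by simp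
qed

lemma conj_act:
  fixes L :: "'a::{field,finite}^'n^'n"
  assumes "invertible L"
  shows "act (act U L) (matrix_inv L ** A ** L) = act (act U A) L"
proof -
  have "L ** (matrix_inv L ** A ** L) = (L ** matrix_inv L) ** A ** L"
    by (simp add: matrix_mul_assoc)
  then show ?thesis using minv_props[OF assms] by (simp add: act_mult)
qed

lemma conj_inj:
  fixes L :: "'a::{field,finite}^'n^'n"
  assumes "invertible L"
  shows "inj (\<lambda>A. matrix_inv L ** A ** L)"
proof (rule injI)
  fix A B assume h: "matrix_inv L ** A ** L = matrix_inv L ** B ** L"
  have e: "\<And>X. L ** (matrix_inv L ** X ** L) ** matrix_inv L = X"
  proof -
    fix X
    have "L ** (matrix_inv L ** X ** L) ** matrix_inv L
        = (L ** matrix_inv L) ** X ** (L ** matrix_inv L)" by (simp add: matrix_mul_assoc)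
    then show "L ** (matrix_inv L ** X ** L) ** matrix_inv L = X"
      using minv_props[OF assms] by simp
  qed
  have "A = L ** (matrix_inv L ** A ** L) ** matrix_inv L" by (rule e[symmetric])
  also have "\<dots> = L ** (matrix_inv L ** B ** L) ** matrix_inv L" using h by (simp only:)
  also have "\<dots> = B" by (rule e)
  finally show "A = B" .
qed

lemma conj_refl: "conj_orbit (P :: ('a::{field,finite}^'n) set \<times> ('a^'n^'n) set) P"
proof -
  have mi1: "matrix_inv (mat 1 :: 'a::{field,finite}^'n^'n) = mat 1"
    by (rule minv_unique) simp_all
  moreover have "mat 1 \<in> (GL :: ('a::{field,finite}^'n^'n) set)"
    unfolding GL_def invertible_def by (intro CollectI exI[of _ "mat 1"]) simp
  ultimately show ?thesis unfolding conj_orbit_def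
    by (intro bexI[of _ "mat 1"]) (simp_all add: act_id mi1)
qed

lemma conj_sym:
  assumes "conj_orbit P Q" shows "conj_orbit Q P"
proof -
  obtain L where L: "L \<in> GL" "fst Q = act (fst P) L"
     "snd Q = (\<lambda>A. matrix_inv L ** A ** L) ` snd P"
    using assms unfolding conj_orbit_def by blast
  have iL: "invertible L" using L(1) unfolding GL_def by simp
  note mi = minv_inv[OF iL] and mp = minv_props[OF iL]
  have f1: "fst P = act (fst Q) (matrix_inv L)" using L(2) act_cancel[OF iL] by simp
  have f2: "snd P = (\<lambda>A. matrix_inv (matrix_inv L) ** A ** matrix_inv L) ` snd Q"
  proof -
    have "\<And>X. L ** (matrix_inv L ** X ** L) ** matrix_inv L = X"
    proof -
      fix X
      have "L ** (matrix_inv L ** X ** L) ** matrix_inv L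
          = (L ** matrix_inv L) ** X ** (L ** matrix_inv L)" by (simp add: matrix_mul_assoc)
      then show "L ** (matrix_inv L ** X ** L) ** matrix_inv L = X" using mp by simp
    qed
    then show ?thesis using L(3) mi(2) by (simp add: image_image)
  qed
  have f3: "matrix_inv L \<in> GL" using mi unfolding GL_def by simp
  show ?thesis unfolding conj_orbit_def by (intro bexI[of _ "matrix_inv L"] conjI f1 f2 f3)
qed

lemma conj_trans:
  assumes "conj_orbit P Q" "conj_orbit Q R" shows "conj_orbit P R"
proof -
  obtain L where L: "L \<in> GL" "fst Q = act (fst P) L"
     "snd Q = (\<lambda>A. matrix_inv L ** A ** L) ` snd P"
    using assms(1) unfolding conj_orbit_def by blast
  obtain M where M: "M \<in> GL" "fst R = act (fst Q) M"
     "snd R = (\<lambda>A. matrix_inv M ** A ** M) ` snd Q"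
    using assms(2) unfolding conj_orbit_def by blast
  have iL: "invertible L" using L(1) unfolding GL_def by simp
  have iM: "invertible M" using M(1) unfolding GL_def by simp
  have f3: "L ** M \<in> GL" using invertible_mult[OF iL iM] unfolding GL_def by simp
  have f1: "fst R = act (fst P) (L ** M)" using L M by (simp add: act_mult)
  have f2: "snd R = (\<lambda>A. matrix_inv (L ** M) ** A ** (L ** M)) ` snd P"
    using L(3) M(3) by (simp add: image_image minv_mult[OF iL iM] matrix_mul_assoc)
  show ?thesis unfolding conj_orbit_def by (intro bexI[of _ "L ** M"] conjI f1 f2 f3)
qed

lemma conj_props:
  fixes U1 U2 :: "('a::{field,finite}^'n) set"
  assumes "conj_orbit (U1, S1) (U2, S2)" "S1 \<subseteq> GL" "S2 \<subseteq> GL"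
  shows "card (orbit_code U1 S1) = card (orbit_code U2 S2) \<and>
              dist_distr k U1 S1 = dist_distr k U2 S2"
proof -
  obtain L where L: "L \<in> GL" "U2 = act U1 L"
     "S2 = (\<lambda>A. matrix_inv L ** A ** L) ` S1"
    using assms(1) unfolding conj_orbit_def by auto
  have iL: "invertible L" using L(1) unfolding GL_def by simp
  let ?c = "\<lambda>A. matrix_inv L ** A ** L"
  have "orbit_code U2 S2 = (\<lambda>W. act W L) ` orbit_code U1 S1"
    unfolding orbit_code_def L(2,3)
    apply (auto simp: conj_act[OF iL])
    subgoal for A by (rule exI[of _ "matrix_inv L ** A ** L"]) (simp add: conj_act[OF iL])
    done
  moreover have "inj_on (\<lambda>W. act W L) (orbit_code U1 S1)"
    using act_inj[OF iL] by (auto simp: inj_on_def)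
  ultimately have c1: "card (orbit_code U1 S1) = card (orbit_code U2 S2)"
    by (simp add: card_image)
  have f: "\<And>i. {A \<in> S2. subspace_dist U2 (act U2 A) = 2 * i}
      = ?c ` {A \<in> S1. subspace_dist U1 (act U1 A) = 2 * i}"
    unfolding L(2,3) by (auto simp: conj_act[OF iL] dist_act[OF iL])
  have stab: "\<And>A. A \<in> S1 \<Longrightarrow> ?c A \<in> Stab U2 \<longleftrightarrow> A \<in> Stab U1"
  proof -
    fix A assume A: "A \<in> S1"
    then have "?c A \<in> GL" "A \<in> GL" using assms(2,3) L(3) by auto
    moreover have "act U2 (?c A) = U2 \<longleftrightarrow> act U1 A = U1"
      unfolding L(2) conj_act[OF iL] using act_inj[OF iL, of "act U1 A" U1] by auto
    ultimately show "?c A \<in> Stab U2 \<longleftrightarrow> A \<in> Stab U1" unfolding Stab_def by simp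
  qed
  have g: "S2 \<inter> Stab U2 = ?c ` (S1 \<inter> Stab U1)"
    unfolding L(3) using stab by auto
  have ci: "inj_on ?c X" for X using conj_inj[OF iL] by (simp add: inj_on_def inj_def)
  have "dist_distr k U1 S1 = dist_distr k U2 S2"
    unfolding dist_distr_def f g card_image[OF ci] ..
  with c1 show ?thesis by simp
qed

theorem mainTheorem5:
  fixes k :: nat
  shows "equiv (orbit_pairs k :: (('a::{field,finite}^'n) set \<times> ('a^'n^'n) set) set)
           {(P1, P2). P1 \<in> orbit_pairs k \<and> P2 \<in> orbit_pairs k \<and> conj_orbit P1 P2}
         \<and> (\<forall>(U1::('a^'n) set) S1 U2 S2. (U1, S1) \<in> orbit_pairs k \<and> (U2, S2) \<in> orbit_pairs k \<and>
              conj_orbit (U1, S1) (U2, S2) \<longrightarrow>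
              card (orbit_code U1 S1) = card (orbit_code U2 S2) \<and>
              dist_distr k U1 S1 = dist_distr k U2 S2)"
proof
  let ?R = "{(P1, P2). P1 \<in> (orbit_pairs k :: (('a::{field,finite}^'n) set \<times> ('a^'n^'n) set) set) \<and> P2 \<in> orbit_pairs k \<and> conj_orbit P1 P2}"
  have "refl_on (orbit_pairs k) ?R" unfolding refl_on_def using conj_refl by auto
  moreover have "sym ?R" unfolding sym_def using conj_sym by auto
  moreover have "trans ?R" unfolding trans_def using conj_trans by auto
  moreover have "?R \<subseteq> orbit_pairs k \<times> orbit_pairs k" by auto
  ultimately show "equiv (orbit_pairs k) ?R" unfolding equiv_def by simp
next
  show "\<forall>(U1::('a^'n) set) S1 U2 S2. (U1, S1) \<in> orbit_pairs k \<and> (U2, S2) \<in> orbit_pairs k \<and>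
              conj_orbit (U1, S1) (U2, S2) \<longrightarrow>
              card (orbit_code U1 S1) = card (orbit_code U2 S2) \<and>
              dist_distr k U1 S1 = dist_distr k U2 S2"
  proof (intro allI impI)
    fix U1 U2 :: "('a^'n) set" and S1 S2
    assume h: "(U1, S1) \<in> orbit_pairs k \<and> (U2, S2) \<in> orbit_pairs k \<and> conj_orbit (U1, S1) (U2, S2)"
    then have "S1 \<subseteq> GL" "S2 \<subseteq> GL" unfolding orbit_pairs_def subgroup_GL_def by auto
    then show "card (orbit_code U1 S1) = card (orbit_code U2 S2) \<and>
              dist_distr k U1 S1 = dist_distr k U2 S2" using conj_props[of U1 S1 U2 S2 k] h by simp
  qed
qed

end
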